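(* Let $\Gamma$ be a finite alphabet and $D,\ell$ positive integers. Let $H:\Gamma^2\to\{0,1\}$ be distributed as a $(D,\ell)$-iterated pair-wise independent function. Then for any $ab\in\Gamma^2$, $\frac{1}{2D}\le\Pr_H[H(ab)=0]\le\frac{1}{D}$. Furthermore, for any $S\subseteq\Gamma^2$ with $|S|=\ell D$, $\Pr_H[\forall ab\in S,\ H(ab)\ne 0]\le 1/2^{\ell}$.
   Context: A family $\mathcal{H}$ of functions $h:U\to V$ is pair-wise independent if for all $u\ne u'$ in $U$ and $v,v'\in V$, $\Pr_h[h(u)=v\wedge h(u')=v']=1/|V|^2$ for $h$ uniform in $\mathcal{H}$. $H:\Gamma^2\to\{0,1\}$ is a $(D,\ell)$-iterated pair-wise independent function if it is obtained by selecting independently at random functions $h_1,\dots,h_\ell:\Gamma^2\to\{0,\dots,\ell D-1\}$, each from a pair-wise independent hash system, and setting $H(ab)=0$ if $\prod_{i=1}^{\ell}h_i(ab)=0$ and $H(ab)=1$ otherwise. *)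

theory Defs
  imports "HOL-Probability.Probability"
begin

definition pairwise_indep_family :: "'a set \<Rightarrow> 'b set \<Rightarrow> ('a \<Rightarrow> 'b) set \<Rightarrow> bool" where
  "pairwise_indep_family U V Hs \<longleftrightarrow>
     finite Hs \<and> Hs \<noteq> {} \<and> (\<forall>h\<in>Hs. \<forall>u\<in>U. h u \<in> V) \<and>
     (\<forall>u\<in>U. \<forall>u'\<in>U. u \<noteq> u' \<longrightarrow> (\<forall>v\<in>V. \<forall>v'\<in>V.
        measure (pmf_of_set Hs) {h. h u = v \<and> h u' = v'} = 1 / (real (card V))^2))"

definition iterated_pi_dist :: "nat \<Rightarrow> (nat \<Rightarrow> ('a \<Rightarrow> nat) set) \<Rightarrow> ('a \<Rightarrow> nat) pmf" where
  "iterated_pi_dist l Hs =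
     map_pmf (\<lambda>hs x. if (\<Prod>i\<in>{1..l}. hs i x) = 0 then 0 else 1)
       (Pi_pmf {1..l} undefined (\<lambda>i. pmf_of_set (Hs i)))"

end

theory Submission
  imports Defs
begin

lemma meas_cnt:
  assumes "finite Hs" "Hs \<noteq> {}"
  shows "measure (pmf_of_set Hs) {h. P h} = (\<Sum>h\<in>Hs. if P h then 1 else 0::real) / real (card Hs)"
proof -
  have "real (card (Hs \<inter> {h. P h})) = (\<Sum>h\<in>Hs. if P h then 1 else 0::real)"
    using assms by (simp add: sum.If_cases)
  then show ?thesis using assms by (simp add: measure_pmf_of_set)
qed

lemma pair_cnt:
  assumes "pairwise_indep_family (UNIV::'a set) {0..<N} Hs" "u \<noteq> u'" "v < N" "v' < N"
  shows "(\<Sum>h\<in>Hs. if h u = v \<and> h u' = v' then 1 else 0::real) = real (card Hs) / (real N)^2"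
proof -
  have f: "finite Hs" "Hs \<noteq> {}" using assms(1) by (auto simp: pairwise_indep_family_def)
  have "measure (pmf_of_set Hs) {h. h u = v \<and> h u' = v'} = 1 / (real N)^2"
    using assms by (auto simp: pairwise_indep_family_def)
  then show ?thesis using f meas_cnt[OF f, of "\<lambda>h. h u = v \<and> h u' = v'"]
    by (simp add: field_simps card_gt_0_iff)
qed

lemma marg_cnt:
  assumes "pairwise_indep_family (UNIV::'a set) {0..<N} Hs" "CARD('a) \<ge> 2" "v < N"
  shows "(\<Sum>h\<in>Hs. if h u = v then 1 else 0::real) = real (card Hs) / real N"
proof -
  have f: "finite Hs" "Hs \<noteq> {}" and V: "\<forall>h\<in>Hs. \<forall>x. h x < N"
    using assms(1) by (auto simp: pairwise_indep_family_def)
  obtain u' :: 'a where u': "u' \<noteq> u"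
  proof -
    have "card (UNIV - {u}) \<ge> 1" using assms(2) by (simp add: card_Diff_singleton)
    then have "UNIV - {u} \<noteq> {}" by (metis card.empty not_one_le_zero)
    then show ?thesis using that by auto
  qed
  have "(\<Sum>h\<in>Hs. if h u = v then 1 else 0::real)
      = (\<Sum>h\<in>Hs. \<Sum>v'\<in>{0..<N}. if h u = v \<and> h u' = v' then 1 else 0::real)"
  proof (rule sum.cong[OF refl])
    fix h assume "h \<in> Hs"
    then have "h u' \<in> {0..<N}" using V by auto
    then show "(if h u = v then 1 else 0::real) = (\<Sum>v'\<in>{0..<N}. if h u = v \<and> h u' = v' then 1 else 0)"
      by (cases "h u = v") (simp_all add: sum.delta)
  qed
  also have "\<dots> = (\<Sum>v'\<in>{0..<N}. \<Sum>h\<in>Hs. if h u = v \<and> h u' = v' then 1 else 0::real)"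
    by (rule sum.swap)
  also have "\<dots> = (\<Sum>v'\<in>{0..<N}. real (card Hs) / (real N)^2)"
    using pair_cnt[OF assms(1) u'[symmetric] assms(3)] by simp
  also have "\<dots> = real (card Hs) / real N"
    by (simp add: power2_eq_square)
  finally show ?thesis .
qed

lemma marg_prob:
  assumes "pairwise_indep_family (UNIV::'a set) {0..<N} Hs" "CARD('a) \<ge> 2" "v < N"
  shows "measure (pmf_of_set Hs) {h. h u = v} = 1 / real N"
proof -
  have f: "finite Hs" "Hs \<noteq> {}" using assms(1) by (auto simp: pairwise_indep_family_def)
  show ?thesis using meas_cnt[OF f, of "\<lambda>h. h u = v"] marg_cnt[OF assms, of u] f
    by (simp add: card_gt_0_iff)
qed

lemma nat_ineq: "(if n = 0 then 1 else 0::real) \<le> (real n - 1) * (real n - 2) / 2"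
proof -
  consider "n = 0" | "n = 1" | "n \<ge> 2" by linarith
  then show ?thesis
  proof cases
    case 3
    then have "real n - 1 \<ge> 0" "real n - 2 \<ge> 0" by auto
    then show ?thesis using 3 by simp
  qed auto
qed

lemma nozero_prob:
  assumes pif: "pairwise_indep_family (UNIV::'a set) {0..<N} Hs" and c2: "CARD('a) \<ge> 2"
    and S: "finite S" "card S = N" and N: "N > 0"
  shows "measure (pmf_of_set Hs) {h. \<forall>u\<in>S. h u \<noteq> 0} \<le> 1 / 2"
proof -
  have f: "finite Hs" "Hs \<noteq> {}" using pif by (auto simp: pairwise_indep_family_def)
  define c where "c = real (card Hs)"
  have c0: "c > 0" using f by (simp add: c_def card_gt_0_iff)
  define z where "z h u = (if h u = (0::nat) then 1 else 0::real)" for h :: "'a \<Rightarrow> nat" and u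
  define k where "k h = (\<Sum>u\<in>S. z h u)" for h
  have pw: "(if \<forall>u\<in>S. h u \<noteq> 0 then 1 else 0) \<le> (k h - 1) * (k h - 2) / 2" for h
  proof -
    have "k h = real (card (S \<inter> {u. h u = 0}))"
      using S by (simp add: k_def z_def sum.If_cases)
    moreover have "(\<forall>u\<in>S. h u \<noteq> 0) \<longleftrightarrow> card (S \<inter> {u. h u = 0}) = 0"
      using S by auto
    ultimately show ?thesis using nat_ineq[of "card (S \<inter> {u. h u = 0})"] by simp
  qed
  have s1: "(\<Sum>h\<in>Hs. z h u) = c / real N" for u
    using marg_cnt[OF pif c2 N, of u] by (simp add: z_def c_def)
  have s2: "(\<Sum>h\<in>Hs. z h u * z h u') = (if u = u' then c / real N else c / (real N)^2)" for u u'
  proof (cases "u = u'")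
    case True
    have "(\<Sum>h\<in>Hs. z h u * z h u') = (\<Sum>h\<in>Hs. z h u)"
      using True by (intro sum.cong) (auto simp: z_def)
    then show ?thesis using s1[of u] True by simp
  next
    case False
    have "(\<Sum>h\<in>Hs. z h u * z h u') = (\<Sum>h\<in>Hs. if h u = 0 \<and> h u' = 0 then 1 else 0::real)"
      by (rule sum.cong) (auto simp: z_def)
    then show ?thesis using pair_cnt[OF pif False N N] False by (simp add: c_def)
  qed
  have sk: "(\<Sum>h\<in>Hs. k h) = c"
  proof -
    have "(\<Sum>h\<in>Hs. k h) = (\<Sum>u\<in>S. \<Sum>h\<in>Hs. z h u)"
      unfolding k_def by (rule sum.swap)
    also have "\<dots> = real N * (c / real N)" using s1 S by simp
    finally show ?thesis using N by simp
  qed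
  have inner: "(\<Sum>u'\<in>S. if u = u' then c / real N else c / (real N)^2) = c / real N + (real N - 1) * (c / (real N)^2)"
    if "u \<in> S" for u
  proof -
    have "S \<inter> {u'. u = u'} = {u}" using that by auto
    moreover have "S - {u'. u = u'} = S - {u}" by auto
    moreover have "real (card (S - {u})) = real N - 1" using that S N
      by (simp add: card_Diff_singleton of_nat_diff)
    ultimately show ?thesis using S by (simp add: sum.If_cases Diff_eq)
  qed
  have sk2: "(\<Sum>h\<in>Hs. (k h)^2) = c + (real N - 1) * c / real N"
  proof -
    have "(\<Sum>h\<in>Hs. (k h)^2) = (\<Sum>h\<in>Hs. \<Sum>u\<in>S. \<Sum>u'\<in>S. z h u * z h u')"
      unfolding k_def power2_eq_square sum_product by simp
    also have "\<dots> = (\<Sum>u\<in>S. \<Sum>h\<in>Hs. \<Sum>u'\<in>S. z h u * z h u')"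
      by (rule sum.swap)
    also have "\<dots> = (\<Sum>u\<in>S. \<Sum>u'\<in>S. \<Sum>h\<in>Hs. z h u * z h u')"
      by (simp add: sum.swap[of _ Hs])
    also have "\<dots> = (\<Sum>u\<in>S. c / real N + (real N - 1) * (c / (real N)^2))"
      using inner by (simp add: s2)
    also have "\<dots> = real N * (c / real N + (real N - 1) * (c / (real N)^2))"
      using S by simp
    also have "\<dots> = c + (real N - 1) * c / real N"
      using N by (simp add: field_simps power2_eq_square)
    finally show ?thesis .
  qed
  have "(\<Sum>h\<in>Hs. if \<forall>u\<in>S. h u \<noteq> 0 then 1 else 0::real) \<le> (\<Sum>h\<in>Hs. (k h - 1) * (k h - 2) / 2)"
    by (rule sum_mono) (rule pw)
  also have "(\<Sum>h\<in>Hs. (k h - 1) * (k h - 2) / 2) = ((\<Sum>h\<in>Hs. (k h)^2) - 3 * (\<Sum>h\<in>Hs. k h) + 2 * c) / 2"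
  proof -
    have "(\<Sum>h\<in>Hs. (k h - 1) * (k h - 2) / 2) = (\<Sum>h\<in>Hs. ((k h)^2 - 3 * k h + 2)) / 2"
      by (simp add: sum_divide_distrib power2_eq_square algebra_simps)
    also have "(\<Sum>h\<in>Hs. ((k h)^2 - 3 * k h + 2)) = (\<Sum>h\<in>Hs. (k h)^2) - 3 * (\<Sum>h\<in>Hs. k h) + 2 * c"
      by (simp add: sum.distrib sum_subtractf sum_distrib_left c_def)
    finally show ?thesis .
  qed
  also have "\<dots> = (real N - 1) * c / (2 * real N)"
    unfolding sk sk2 using N by (simp add: field_simps)
  also have "\<dots> \<le> c / 2"
    using N c0 by (simp add: field_simps)
  finally have le: "(\<Sum>h\<in>Hs. if \<forall>u\<in>S. h u \<noteq> 0 then 1 else 0::real) \<le> c / 2" .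
  have "measure (pmf_of_set Hs) {h. \<forall>u\<in>S. h u \<noteq> 0} = (\<Sum>h\<in>Hs. if \<forall>u\<in>S. h u \<noteq> 0 then 1 else 0::real) / c"
    using meas_cnt[OF f, of "\<lambda>h. \<forall>u\<in>S. h u \<noteq> 0"] by (simp add: c_def)
  also have "\<dots> \<le> (c / 2) / c"
    using le c0 by (intro divide_right_mono) auto
  also have "\<dots> = 1 / 2" using c0 by simp
  finally show ?thesis .
qed

lemma compl_prob: "measure (measure_pmf M) (- A) = 1 - measure (measure_pmf M) A"
  using measure_pmf.prob_compl[of A M] by (simp add: Compl_eq_Diff_UNIV)

lemma bounds:
  fixes D l :: nat
  assumes "D > 0" "l > 0"
  defines "p \<equiv> 1 / real (l * D)"
  shows "1 / (2 * real D) \<le> 1 - (1 - p)^l \<and> 1 - (1 - p)^l \<le> 1 / real D"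
proof
  have "1 \<le> l * D" using assms by (simp add: Suc_le_eq)
  then have "1 \<le> real l * real D" by (metis of_nat_1 of_nat_le_iff of_nat_mult)
  then have p0: "0 < p" "p \<le> 1" using assms by (auto simp: p_def)
  have lp: "real l * p = 1 / real D" using assms by (simp add: p_def)
  have "1 + real l * (-p) \<le> (1 + (-p))^l"
    by (rule Bernoulli_inequality) (use p0 in auto)
  then show "1 - (1 - p)^l \<le> 1 / real D" using lp by simp
  have b2: "1 + real l * p \<le> (1 + p)^l"
    by (rule Bernoulli_inequality) (use p0 in auto)
  have "(1 - p)^l * (1 + real l * p) \<le> (1 - p)^l * (1 + p)^l"
    using b2 p0 by (intro mult_left_mono) auto
  also have "\<dots> = (1 - p^2)^l" by (simp add: power_mult_distrib[symmetric] power2_eq_square algebra_simps)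
  also have "\<dots> \<le> 1" using p0 by (intro power_le_one) (auto simp: power_le_one)
  finally have "(1 - p)^l * (1 + 1 / real D) \<le> 1" using lp by simp
  then have "(1 - p)^l \<le> real D / (real D + 1)" using assms(1)
    by (simp add: field_simps)
  then have "1 - (1 - p)^l \<ge> 1 / (real D + 1)" using assms(1) by (simp add: field_simps)
  moreover have "1 / (2 * real D) \<le> 1 / (real D + 1)" using assms(1)
    by (intro divide_left_mono) auto
  ultimately show "1 / (2 * real D) \<le> 1 - (1 - p)^l" by linarith
qed

theorem proposition6:
  fixes Hs :: "nat \<Rightarrow> ('g::finite \<times> 'g \<Rightarrow> nat) set" and D l :: nat
  assumes "D > 0" and "l > 0" and "CARD('g) \<ge> 2"
    and "\<forall>i\<in>{1..l}. pairwise_indep_family (UNIV :: ('g \<times> 'g) set) {0..<l * D} (Hs i)"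
  shows "(\<forall>ab :: 'g \<times> 'g.
           1 / (2 * real D) \<le> measure (iterated_pi_dist l Hs) {H. H ab = 0} \<and>
           measure (iterated_pi_dist l Hs) {H. H ab = 0} \<le> 1 / real D) \<and>
         (\<forall>S :: ('g \<times> 'g) set. card S = l * D \<longrightarrow>
           measure (iterated_pi_dist l Hs) {H. \<forall>ab\<in>S. H ab \<noteq> 0} \<le> 1 / 2 ^ l)"
proof -
  define N where "N = l * D"
  have N0: "N > 0" using assms by (simp add: N_def)
  have c2: "CARD('g \<times> 'g) \<ge> 2"
  proof -
    have "CARD('g) * CARD('g) \<ge> 2 * 1" using assms(3) by (intro mult_mono) auto
    then show ?thesis by (simp flip: UNIV_Times_UNIV add: card_cartesian_product)
  qed
  have pif: "pairwise_indep_family (UNIV :: ('g \<times> 'g) set) {0..<N} (Hs i)" if "i \<in> {1..l}" for i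
    using assms(4) that by (simp add: N_def)
  define P where "P = Pi_pmf {1..l} undefined (\<lambda>i. pmf_of_set (Hs i))"
  define f where "f = (\<lambda>(hs :: nat \<Rightarrow> 'g \<times> 'g \<Rightarrow> nat) x. if (\<Prod>i\<in>{1..l}. hs i x) = 0 then 0 else (1::nat))"
  have dist: "iterated_pi_dist l Hs = map_pmf f P" by (simp add: iterated_pi_dist_def P_def f_def)
  have part1: "measure (iterated_pi_dist l Hs) {H. H ab = 0} = 1 - (1 - 1 / real N)^l" for ab
  proof -
    have "f -` {H. H ab = 0} = - Pi {1..l} (\<lambda>i. {h. h ab \<noteq> 0})"
      by (auto simp: f_def Pi_iff) (metis atLeastAtMost_iff less_numeral_extra(3) One_nat_def)
    then have "measure (iterated_pi_dist l Hs) {H. H ab = 0} = 1 - measure P (Pi {1..l} (\<lambda>i. {h. h ab \<noteq> 0}))"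
      by (simp add: dist compl_prob)
    also have "measure P (Pi {1..l} (\<lambda>i. {h. h ab \<noteq> 0})) = (\<Prod>i\<in>{1..l}. measure (pmf_of_set (Hs i)) {h. h ab \<noteq> 0})"
      unfolding P_def by (rule measure_Pi_pmf_Pi) simp
    also have "\<dots> = (\<Prod>i\<in>{1..l}. 1 - 1 / real N)"
    proof (rule prod.cong[OF refl])
      fix i assume i: "i \<in> {1..l}"
      have "{h. h ab \<noteq> 0} = - {h. h ab = 0}" by auto
      then show "measure (pmf_of_set (Hs i)) {h. h ab \<noteq> 0} = 1 - 1 / real N"
        using marg_prob[OF pif[OF i] c2 N0, of ab] compl_prob[of "pmf_of_set (Hs i)" "{h. h ab = 0}"] by metis
    qed
    finally show ?thesis by simp
  qed
  have part2: "measure (iterated_pi_dist l Hs) {H. \<forall>ab\<in>S. H ab \<noteq> 0} \<le> 1 / 2 ^ l" if S: "card S = N" for S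
  proof -
    have fS: "finite S" using S N0 card.infinite by fastforce
    have "f -` {H. \<forall>ab\<in>S. H ab \<noteq> 0} = Pi {1..l} (\<lambda>i. {h. \<forall>ab\<in>S. h ab \<noteq> 0})"
      by (auto simp: f_def Pi_iff)
    then have "measure (iterated_pi_dist l Hs) {H. \<forall>ab\<in>S. H ab \<noteq> 0} = measure P (Pi {1..l} (\<lambda>i. {h. \<forall>ab\<in>S. h ab \<noteq> 0}))"
      by (simp add: dist)
    also have "\<dots> = (\<Prod>i\<in>{1..l}. measure (pmf_of_set (Hs i)) {h. \<forall>ab\<in>S. h ab \<noteq> 0})"
      unfolding P_def by (rule measure_Pi_pmf_Pi) simp
    also have "\<dots> \<le> (\<Prod>i\<in>{1..l}. 1 / 2)"
      by (rule prod_mono) (use nozero_prob[OF pif c2 fS S N0] in auto)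
    also have "\<dots> = 1 / 2 ^ l" by (simp add: power_one_over)
    finally show ?thesis .
  qed
  show ?thesis
    using part1 part2 bounds[OF assms(1,2)] by (simp add: N_def)
qed

end
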